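(* Let $a>1$ and consider the planar system of ODEs $$\dot x = x\,(|x|^a-|y|),\qquad \dot y = y\left(\tfrac12 |x|^a-|y|\right),$$ which for $x,y\ge 0$ reads $\dot x = x(x^a-y)$, $\dot y = y(\tfrac12 x^a - y)$. Then the origin $0$ is an equilibrium and its stability index (with respect to $X=\{0\}$) is $\sigma(0)=a-1>0$.
   Context: For a flow on $\mathbb{R}^n$ and a compact invariant set $X$, $\ell$ denotes Lebesgue measure, $B_\varepsilon(x)$ the $\varepsilon$-neighbourhood of $x$, and ${\cal B}(X)$ the basin of attraction of $X$, i.e. the set of points whose $\omega$-limit set is contained in $X$. For $x\in X$ and $\varepsilon>0$ let $\Sigma_\varepsilon(x)=\ell(B_\varepsilon(x)\cap{\cal B}(X))/\ell(B_\varepsilon(x))$, $\sigma_-(x)=\lim_{\varepsilon\to0}\ln(\Sigma_\varepsilon(x))/\ln\varepsilon$, $\sigma_+(x)=\lim_{\varepsilon\to0}\ln(1-\Sigma_\varepsilon(x))/\ln\varepsilon$, with the conventions $\sigma_-(x)=\infty$ if $\Sigma_\varepsilon(x)=0$ for some $\varepsilon>0$ and $\sigma_+(x)=\infty$ if $\Sigma_\varepsilon(x)=1$ for some $\varepsilon>0$. The stability index is $\sigma(x)=\sigma_+(x)-\sigma_-(x)\in[-\infty,\infty]$. Here $X=\{0\}$ and $x=0$. *)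

theory Defs
  imports "HOL-Analysis.Analysis"
begin

definition fwd_solution :: "('a::real_normed_vector \<Rightarrow> 'a) \<Rightarrow> 'a \<Rightarrow> (real \<Rightarrow> 'a) \<Rightarrow> bool" where
  "fwd_solution F p \<phi> \<longleftrightarrow> \<phi> 0 = p \<and>
     (\<forall>t\<ge>0. (\<phi> has_vector_derivative F (\<phi> t)) (at t within {0..}))"

definition omega_limit :: "(real \<Rightarrow> 'a::topological_space) \<Rightarrow> 'a set" where
  "omega_limit \<phi> = {z. \<exists>s::nat \<Rightarrow> real. filterlim s at_top sequentially \<and> ((\<lambda>n. \<phi> (s n)) \<longlonglongrightarrow> z)}"

definition basin :: "('a::real_normed_vector \<Rightarrow> 'a) \<Rightarrow> 'a set \<Rightarrow> 'a set" where
  "basin F X = {p. \<exists>\<phi>. fwd_solution F p \<phi> \<and> omega_limit \<phi> \<subseteq> X}"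

definition Sigma_eps :: "'a::euclidean_space set \<Rightarrow> 'a \<Rightarrow> real \<Rightarrow> real" where
  "Sigma_eps B x \<epsilon> = measure lebesgue (ball x \<epsilon> \<inter> B) / measure lebesgue (ball x \<epsilon>)"

definition is_sigma_minus :: "'a::euclidean_space set \<Rightarrow> 'a \<Rightarrow> ereal \<Rightarrow> bool" where
  "is_sigma_minus B x s \<longleftrightarrow>
     (if \<exists>\<epsilon>>0. Sigma_eps B x \<epsilon> = 0 then s = \<infinity>
      else ((\<lambda>\<epsilon>. ereal (ln (Sigma_eps B x \<epsilon>) / ln \<epsilon>)) \<longlongrightarrow> s) (at_right 0))"

definition is_sigma_plus :: "'a::euclidean_space set \<Rightarrow> 'a \<Rightarrow> ereal \<Rightarrow> bool" where
  "is_sigma_plus B x s \<longleftrightarrow>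
     (if \<exists>\<epsilon>>0. Sigma_eps B x \<epsilon> = 1 then s = \<infinity>
      else ((\<lambda>\<epsilon>. ereal (ln (1 - Sigma_eps B x \<epsilon>) / ln \<epsilon>)) \<longlongrightarrow> s) (at_right 0))"

definition is_stability_index :: "'a::euclidean_space set \<Rightarrow> 'a \<Rightarrow> ereal \<Rightarrow> bool" where
  "is_stability_index B x s \<longleftrightarrow>
     (\<exists>sp sm. is_sigma_plus B x sp \<and> is_sigma_minus B x sm \<and> s = sp - sm)"

definition field_a :: "real \<Rightarrow> real \<times> real \<Rightarrow> real \<times> real" where
  "field_a a = (\<lambda>(x, y). (x * (\<bar>x\<bar> powr a - \<bar>y\<bar>), y * ((1/2) * \<bar>x\<bar> powr a - \<bar>y\<bar>)))"

end

theory Submission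
  imports Defs
begin

lemma at_pos_within: "(x::real) > 0 \<Longrightarrow> at x within {0..} = at x"
  by (rule at_within_interior) simp

lemma deriv_cont_on:
  assumes "\<forall>t\<ge>0. (f has_real_derivative f' t) (at t within {0..})"
  shows "continuous_on {0..} f"
  using assms by (auto simp: continuous_on_eq_continuous_within intro: DERIV_continuous)

lemma mono0:
  fixes f :: "real \<Rightarrow> real"
  assumes d: "\<forall>t\<ge>0. (f has_real_derivative f' t) (at t within {0..})"
    and nn: "\<forall>t\<ge>0. f' t \<ge> 0" and "0 \<le> s" "s \<le> t"
  shows "f s \<le> f t"
proof (rule DERIV_nonneg_imp_increasing_open[OF \<open>s \<le> t\<close>])
  fix x assume "s < x" "x < t"
  then have "x > 0" using \<open>0 \<le> s\<close> by auto
  then have "(f has_real_derivative f' x) (at x)" using d at_pos_within[of x] by (metis less_imp_le)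
  then show "\<exists>y. DERIV f x :> y \<and> 0 \<le> y" using nn \<open>x > 0\<close> by auto
next
  show "continuous_on {s..t} f"
    using continuous_on_subset[OF deriv_cont_on[OF d], of "{s..t}"] \<open>0 \<le> s\<close> by auto
qed

lemma fwd_comp:
  assumes "fwd_solution F p \<phi>" "t \<ge> 0"
  shows "((\<lambda>t. fst (\<phi> t)) has_real_derivative fst (F (\<phi> t))) (at t within {0..})"
    and "((\<lambda>t. snd (\<phi> t)) has_real_derivative snd (F (\<phi> t))) (at t within {0..})"
proof -
  have d: "(\<phi> has_vector_derivative F (\<phi> t)) (at t within {0..})"
    using assms unfolding fwd_solution_def by auto
  show "((\<lambda>t. fst (\<phi> t)) has_real_derivative fst (F (\<phi> t))) (at t within {0..})"
    using bounded_linear.has_vector_derivative[OF bounded_linear_fst d]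
    by (simp add: has_real_derivative_iff_has_vector_derivative)
  show "((\<lambda>t. snd (\<phi> t)) has_real_derivative snd (F (\<phi> t))) (at t within {0..})"
    using bounded_linear.has_vector_derivative[OF bounded_linear_snd d]
    by (simp add: has_real_derivative_iff_has_vector_derivative)
qed

lemma integral_deriv0:
  fixes c :: "real \<Rightarrow> real"
  assumes "continuous_on {0..} c" "t \<ge> 0"
  shows "((\<lambda>u. integral {0..u} c) has_real_derivative c t) (at t within {0..})"
proof -
  have "continuous_on {0..t+1} c" using assms(1) by (rule continuous_on_subset) auto
  then have "((\<lambda>u. integral {0..u} c) has_vector_derivative c t) (at t within {0..t+1})"
    using assms(2) by (intro integral_has_vector_derivative) auto
  moreover have "at t within {0..t+1} = at t within {0..}"
    by (rule at_within_nhd[of _ "{t-1<..<t+1}"]) auto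
  ultimately show ?thesis by (simp add: has_real_derivative_iff_has_vector_derivative)
qed

lemma linear_ode:
  fixes f c :: "real \<Rightarrow> real"
  assumes d: "\<forall>t\<ge>0. (f has_real_derivative c t * f t) (at t within {0..})"
    and cc: "continuous_on {0..} c" and "t \<ge> 0"
  shows "f t = f 0 * exp (integral {0..t} c)"
proof -
  define H where "H u = f u * exp (- integral {0..u} c)" for u
  have dH: "(H has_real_derivative 0) (at u within {0..})" if "u \<ge> 0" for u
  proof -
    have "(H has_real_derivative (c u * f u) * exp (- integral {0..u} c) + f u * (exp (- integral {0..u} c) * (- c u))) (at u within {0..})"
      unfolding H_def using d that integral_deriv0[OF cc that]
      by (intro derivative_eq_intros) auto
    then show ?thesis by (simp add: algebra_simps)
  qed
  obtain k where "\<forall>x\<in>{0..}. H x = k"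
    using has_field_derivative_zero_constant[of "{0..}" H] dH by (auto simp: convex_real_interval)
  then have "H t = H 0" using \<open>t \<ge> 0\<close> by auto
  then show ?thesis unfolding H_def by (simp add: exp_minus field_simps)
qed

definition ws :: "real \<Rightarrow> real" where "ws a = (a - 1/2) / (a - 1)"

lemma field_eq: "field_a a (x, y) = (x * (\<bar>x\<bar> powr a - \<bar>y\<bar>), y * ((1/2) * \<bar>x\<bar> powr a - \<bar>y\<bar>))"
  by (simp add: field_a_def)

lemma refl_sol:
  assumes sol: "fwd_solution (field_a a) (x0, y0) \<phi>" and s1: "\<bar>s1\<bar> = (1::real)" and s2: "\<bar>s2\<bar> = (1::real)"
  shows "fwd_solution (field_a a) (s1 * x0, s2 * y0) (\<lambda>t. (s1 * fst (\<phi> t), s2 * snd (\<phi> t)))"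
  unfolding fwd_solution_def
proof (intro conjI allI impI)
  show "(s1 * fst (\<phi> 0), s2 * snd (\<phi> 0)) = (s1 * x0, s2 * y0)"
    using sol by (simp add: fwd_solution_def)
next
  fix t :: real assume t: "t \<ge> 0"
  have d1: "((\<lambda>t. s1 * fst (\<phi> t)) has_real_derivative s1 * fst (field_a a (\<phi> t))) (at t within {0..})"
    using fwd_comp(1)[OF sol t] by (intro DERIV_cmult)
  have d2: "((\<lambda>t. s2 * snd (\<phi> t)) has_real_derivative s2 * snd (field_a a (\<phi> t))) (at t within {0..})"
    using fwd_comp(2)[OF sol t] by (intro DERIV_cmult)
  have eq: "field_a a (s1 * fst (\<phi> t), s2 * snd (\<phi> t)) = (s1 * fst (field_a a (\<phi> t)), s2 * snd (field_a a (\<phi> t)))"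
    using s1 s2 by (cases "\<phi> t") (simp add: field_a_def abs_mult algebra_simps)
  show "((\<lambda>t. (s1 * fst (\<phi> t), s2 * snd (\<phi> t))) has_vector_derivative
          field_a a (s1 * fst (\<phi> t), s2 * snd (\<phi> t))) (at t within {0..})"
    unfolding eq using d1 d2
    by (intro has_vector_derivative_Pair) (simp_all add: has_real_derivative_iff_has_vector_derivative)
qed

lemma nonexist:
  assumes a: "a > 1" and x0: "x0 > 0" and y0: "y0 \<ge> 0" and lt: "y0 < ws a * x0 powr a"
    and sol: "fwd_solution (field_a a) (x0, y0) \<phi>"
  shows False
proof -
  define x where "x t = fst (\<phi> t)" for t
  define y where "y t = snd (\<phi> t)" for t
  have x00: "x 0 = x0" "y 0 = y0" using sol by (auto simp: x_def y_def fwd_solution_def)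
  have dx: "\<forall>t\<ge>0. (x has_real_derivative (\<bar>x t\<bar> powr a - \<bar>y t\<bar>) * x t) (at t within {0..})"
  proof (intro allI impI)
    fix t :: real assume t: "t \<ge> 0"
    obtain u v where uv: "\<phi> t = (u, v)" by fastforce
    show "(x has_real_derivative (\<bar>x t\<bar> powr a - \<bar>y t\<bar>) * x t) (at t within {0..})"
      using fwd_comp(1)[OF sol t] uv unfolding x_def y_def by (simp add: field_a_def algebra_simps)
  qed
  have dy: "\<forall>t\<ge>0. (y has_real_derivative ((1/2) * \<bar>x t\<bar> powr a - \<bar>y t\<bar>) * y t) (at t within {0..})"
  proof (intro allI impI)
    fix t :: real assume t: "t \<ge> 0"
    obtain u v where uv: "\<phi> t = (u, v)" by fastforce
    show "(y has_real_derivative ((1/2) * \<bar>x t\<bar> powr a - \<bar>y t\<bar>) * y t) (at t within {0..})"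
      using fwd_comp(2)[OF sol t] uv unfolding x_def y_def by (simp add: field_a_def algebra_simps)
  qed
  have cx: "continuous_on {0..} x" using deriv_cont_on[OF dx] .
  have cy: "continuous_on {0..} y" using deriv_cont_on[OF dy] .
  have cxa: "continuous_on {0..} (\<lambda>t. \<bar>x t\<bar> powr a)"
    using a by (intro continuous_on_powr' continuous_intros cx) auto
  have c1: "continuous_on {0..} (\<lambda>t. \<bar>x t\<bar> powr a - \<bar>y t\<bar>)"
    by (intro continuous_intros cxa cy)
  have c2: "continuous_on {0..} (\<lambda>t. (1/2) * \<bar>x t\<bar> powr a - \<bar>y t\<bar>)"
    by (intro continuous_intros cxa cy)
  have xpos: "x t > 0" if "t \<ge> 0" for t
    using linear_ode[OF dx c1 that] x00 x0 by simp
  have yrep: "y t = y0 * exp (integral {0..t} (\<lambda>t. (1/2) * \<bar>x t\<bar> powr a - \<bar>y t\<bar>))" if "t \<ge> 0" for t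
    using linear_ode[OF dy c2 that] x00 by simp
  show False
  proof (cases "y0 = 0")
    case True
    then have y0': "y t = 0" if "t \<ge> 0" for t using yrep[OF that] by simp
    define z where "z t = x t powr (- a)" for t
    have dz: "\<forall>t\<ge>0. ((\<lambda>t. - z t - a * t) has_real_derivative 0) (at t within {0..})"
    proof (intro allI impI)
      fix t :: real assume t: "t \<ge> 0"
      have "((\<lambda>t. - z t - a * t) has_real_derivative
         - ((- a) * x t powr (- a - 1) * ((\<bar>x t\<bar> powr a - \<bar>y t\<bar>) * x t)) - a) (at t within {0..})"
        unfolding z_def using dx t xpos[OF t]
        by (auto intro!: derivative_eq_intros)
      moreover have "- ((- a) * x t powr (- a - 1) * ((\<bar>x t\<bar> powr a - \<bar>y t\<bar>) * x t)) - a = 0"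
        using xpos[OF t] y0'[OF t]
        by (simp add: powr_diff powr_minus field_simps)
      ultimately show "((\<lambda>t. - z t - a * t) has_real_derivative 0) (at t within {0..})" by metis
    qed
    define t1 where "t1 = z 0 / a + 1"
    have zpos: "z 0 > 0" unfolding z_def using x00 x0 by simp
    then have t1: "t1 \<ge> 0" using a unfolding t1_def by (simp add: field_simps)
    have "- z 0 - a * 0 \<le> - z t1 - a * t1"
      using mono0[OF dz, of 0 t1] t1 by simp
    moreover have "z t1 > 0" unfolding z_def using xpos[OF t1] by simp
    moreover have "a * t1 = z 0 + a" unfolding t1_def using a by (simp add: field_simps)
    ultimately show False using a by linarith
  next
    case False
    then have y0p: "y0 > 0" using y0 by simp
    have ypos: "y t > 0" if "t \<ge> 0" for t using yrep[OF that] y0p by simp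
    define r where "r t = ws a - y t * x t powr (- a)" for t
    have dr: "\<forall>t\<ge>0. (r has_real_derivative ((a - 1) * y t) * r t) (at t within {0..})"
    proof (intro allI impI)
      fix t :: real assume t: "t \<ge> 0"
      have "(r has_real_derivative - ((((1/2) * \<bar>x t\<bar> powr a - \<bar>y t\<bar>) * y t) * x t powr (- a)
              + y t * ((- a) * x t powr (- a - 1) * ((\<bar>x t\<bar> powr a - \<bar>y t\<bar>) * x t)))) (at t within {0..})"
        unfolding r_def using dx dy t xpos[OF t]
        by (auto intro!: derivative_eq_intros)
      moreover have "- ((((1/2) * \<bar>x t\<bar> powr a - \<bar>y t\<bar>) * y t) * x t powr (- a)
              + y t * ((- a) * x t powr (- a - 1) * ((\<bar>x t\<bar> powr a - \<bar>y t\<bar>) * x t)))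
            = ((a - 1) * y t) * r t"
      proof -
        have xp: "x t > 0" "y t > 0" using xpos[OF t] ypos[OF t] by auto
        define P where "P = x t powr a"
        have P: "P > 0" using xp unfolding P_def by simp
        have e1: "x t powr (- a) = 1 / P" unfolding P_def by (simp add: powr_minus field_simps)
        have e2: "x t powr (- a - 1) = 1 / (P * x t)" unfolding P_def using xp
          by (simp add: powr_diff powr_minus field_simps)
        show ?thesis unfolding r_def ws_def e1 e2 using xp P a
          by (simp add: P_def[symmetric] field_simps)
      qed
      ultimately show "(r has_real_derivative ((a - 1) * y t) * r t) (at t within {0..})" by metis
    qed
    have cr: "continuous_on {0..} (\<lambda>t. (a - 1) * y t)" by (intro continuous_intros cy)
    have r0: "r 0 > 0" unfolding r_def using x00 lt x0
      by (simp add: powr_minus field_simps)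
    have rpos: "r t > 0" if "t \<ge> 0" for t using linear_ode[OF dr cr that] r0 by simp
    have rle: "r t \<le> ws a" if "t \<ge> 0" for t
      unfolding r_def using ypos[OF that] xpos[OF that] by simp
    have dK: "\<forall>t\<ge>0. ((\<lambda>t. - (1 / y t - t)) has_real_derivative (\<bar>x t\<bar> powr a) / (2 * y t)) (at t within {0..})"
    proof (intro allI impI)
      fix t :: real assume t: "t \<ge> 0"
      have "((\<lambda>t. - (1 / y t - t)) has_real_derivative - (- (((1/2) * \<bar>x t\<bar> powr a - \<bar>y t\<bar>) * y t) / (y t)^2 - 1)) (at t within {0..})"
        using dy t ypos[OF t] by (auto intro!: derivative_eq_intros simp: power2_eq_square)
      moreover have "- (- (((1/2) * \<bar>x t\<bar> powr a - \<bar>y t\<bar>) * y t) / (y t)^2 - 1) = (\<bar>x t\<bar> powr a) / (2 * y t)"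
        using ypos[OF t] by (simp add: field_simps power2_eq_square)
      ultimately show "((\<lambda>t. - (1 / y t - t)) has_real_derivative (\<bar>x t\<bar> powr a) / (2 * y t)) (at t within {0..})" by metis
    qed
    have ylow: "y t \<ge> y0 / (1 + y0 * t)" if t: "t \<ge> 0" for t
    proof -
      have "- (1 / y 0 - 0) \<le> - (1 / y t - t)"
      proof (rule mono0[OF dK])
        show "\<forall>t\<ge>0. 0 \<le> \<bar>x t\<bar> powr a / (2 * y t)"
          using ypos by (auto intro: divide_nonneg_pos)
      qed (use t in auto)
      then have "1 / y t \<le> 1 / y0 + t" using x00 by simp
      then have "1 / y t \<le> (1 + y0 * t) / y0" using y0p by (simp add: field_simps)
      moreover have p: "1 + y0 * t > 0" using y0p t by (simp add: add_pos_nonneg)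
      ultimately show ?thesis using ypos[OF t] y0p t
        by (simp add: field_simps divide_le_eq le_divide_eq)
    qed
    have dG: "\<forall>t\<ge>0. ((\<lambda>t. ln (r t) - (a - 1) * ln (1 + y0 * t)) has_real_derivative
                 (a - 1) * (y t - y0 / (1 + y0 * t))) (at t within {0..})"
    proof (intro allI impI)
      fix t :: real assume t: "t \<ge> 0"
      have p: "1 + y0 * t > 0" using y0p t by (simp add: add_pos_nonneg)
      have D1: "((\<lambda>t. ln (r t)) has_real_derivative 1 / r t * (((a - 1) * y t) * r t)) (at t within {0..})"
        using DERIV_chain2[where f=ln and g=r and x=t, OF DERIV_ln_divide[OF rpos[OF t]]] dr t by blast
      have D0: "((\<lambda>t. 1 + y0 * t) has_real_derivative y0) (at t within {0..})"
        by (auto intro!: derivative_eq_intros)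
      have D2: "((\<lambda>t. ln (1 + y0 * t)) has_real_derivative 1 / (1 + y0 * t) * y0) (at t within {0..})"
        using DERIV_chain2[where f=ln and g="\<lambda>t. 1 + y0 * t" and x=t, OF DERIV_ln_divide[OF p] D0] by simp
      have D3: "((\<lambda>t. ln (r t) - (a - 1) * ln (1 + y0 * t)) has_real_derivative
                 1 / r t * (((a - 1) * y t) * r t) - (a - 1) * (1 / (1 + y0 * t) * y0)) (at t within {0..})"
        by (intro DERIV_diff DERIV_cmult D1 D2)
      have "1 / r t * (((a - 1) * y t) * r t) - (a - 1) * (1 / (1 + y0 * t) * y0) = (a - 1) * (y t - y0 / (1 + y0 * t))"
        using rpos[OF t] by (simp add: field_simps)
      then show "((\<lambda>t. ln (r t) - (a - 1) * ln (1 + y0 * t)) has_real_derivative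
                 (a - 1) * (y t - y0 / (1 + y0 * t))) (at t within {0..})"
        using D3 by metis
    qed
    have Gmono: "ln (r 0) \<le> ln (r t) - (a - 1) * ln (1 + y0 * t)" if t: "t \<ge> 0" for t
      using mono0[OF dG, of 0 t] t ylow a by simp
    define M where "M = \<bar>ln (ws a) - ln (r 0)\<bar> / (a - 1) + 1"
    define t1 where "t1 = exp M / y0"
    have t1: "t1 \<ge> 0" unfolding t1_def using y0p by simp
    have "ln (1 + y0 * t1) > M"
    proof -
      have "1 + y0 * t1 > exp M" unfolding t1_def using y0p by simp
      moreover have "1 + y0 * t1 > 0" using calculation exp_gt_zero[of M] by linarith
      ultimately have "ln (1 + y0 * t1) > ln (exp M)" using exp_gt_zero[of M] by (simp only: ln_less_cancel_iff)
      then show ?thesis by simp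
    qed
    then have "(a - 1) * ln (1 + y0 * t1) > (a - 1) * M" using a by simp
    also have "(a - 1) * M = \<bar>ln (ws a) - ln (r 0)\<bar> + (a - 1)" unfolding M_def using a by (simp add: field_simps)
    finally have big: "(a - 1) * ln (1 + y0 * t1) > ln (ws a) - ln (r 0)" using a by linarith
    have "ln (r t1) \<le> ln (ws a)" using rpos[OF t1] rle[OF t1] by simp
    then show False using Gmono[OF t1] big by linarith
  qed
qed

lemma omega0:
  fixes \<phi> :: "real \<Rightarrow> 'a::real_normed_vector"
  assumes "(\<phi> \<longlongrightarrow> 0) at_top"
  shows "omega_limit \<phi> \<subseteq> {0}"
proof
  fix z assume "z \<in> omega_limit \<phi>"
  then obtain s :: "nat \<Rightarrow> real" where s: "filterlim s at_top sequentially" "(\<lambda>n. \<phi> (s n)) \<longlonglongrightarrow> z"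
    unfolding omega_limit_def by auto
  have "(\<lambda>n. \<phi> (s n)) \<longlonglongrightarrow> 0" using filterlim_compose[OF assms s(1)] .
  then show "z \<in> {0}" using s(2) LIMSEQ_unique by auto
qed

lemma in_basin:
  assumes "fwd_solution F p \<phi>" "(\<phi> \<longlongrightarrow> 0) at_top"
  shows "p \<in> basin F {0}"
  using assms omega0 unfolding basin_def by blast

lemma goodI:
  assumes "fwd_solution F p \<phi>" "(\<phi> \<longlongrightarrow> 0) at_top"
  shows "\<exists>\<phi>. fwd_solution F p \<phi> \<and> (\<phi> \<longlongrightarrow> 0) at_top"
  using assms by blast

lemma filterlim_lin: "q > 0 \<Longrightarrow> filterlim (\<lambda>u::real. (u + w) / q) at_top at_top"
  unfolding filterlim_at_top eventually_at_top_linorder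
proof (intro allI)
  fix Z :: real assume "q > 0"
  show "\<exists>N. \<forall>n\<ge>N. Z \<le> (n + w) / q"
    by (rule exI[of _ "Z * q - w"]) (use \<open>q > 0\<close> in \<open>auto simp: field_simps\<close>)
qed

lemma basin_axis: "\<exists>\<phi>. fwd_solution (field_a a) (0, y0) \<phi> \<and> (\<phi> \<longlongrightarrow> 0) at_top"
proof (rule goodI)
  define \<phi> where "\<phi> = (\<lambda>t. (0::real, y0 / (1 + \<bar>y0\<bar> * t)))"
  show "fwd_solution (field_a a) (0, y0) \<phi>"
    unfolding fwd_solution_def
  proof (intro conjI allI impI)
    show "\<phi> 0 = (0, y0)" by (simp add: \<phi>_def)
    fix t :: real assume t: "t \<ge> 0"
    have p: "1 + \<bar>y0\<bar> * t > 0" using t by (simp add: add_pos_nonneg)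
    have d: "((\<lambda>t. y0 / (1 + \<bar>y0\<bar> * t)) has_real_derivative - (y0 * \<bar>y0\<bar>) / (1 + \<bar>y0\<bar> * t)^2) (at t within {0..})"
      using p by (auto intro!: derivative_eq_intros simp: power2_eq_square field_simps)
    have e: "field_a a (\<phi> t) = (0, - (y0 * \<bar>y0\<bar>) / (1 + \<bar>y0\<bar> * t)^2)"
      using p by (simp add: \<phi>_def field_a_def abs_divide power2_eq_square field_simps)
    show "(\<phi> has_vector_derivative field_a a (\<phi> t)) (at t within {0..})"
      unfolding e unfolding \<phi>_def using d
      by (intro has_vector_derivative_Pair) (auto intro: derivative_intros simp: has_real_derivative_iff_has_vector_derivative)
  qed
  show "(\<phi> \<longlongrightarrow> 0) at_top"
  proof (cases "y0 = 0")
    case True then show ?thesis by (simp add: \<phi>_def zero_prod_def)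
  next
    case False
    have "filterlim (\<lambda>t. (t + 1 / \<bar>y0\<bar>) / (1 / \<bar>y0\<bar>)) at_top at_top"
      using False by (intro filterlim_lin) simp
    moreover have "(\<lambda>t. (t + 1 / \<bar>y0\<bar>) / (1 / \<bar>y0\<bar>)) = (\<lambda>t. 1 + \<bar>y0\<bar> * t)"
      using False by (auto simp: field_simps)
    ultimately have "filterlim (\<lambda>t. 1 + \<bar>y0\<bar> * t) at_top at_top" by simp
    then have "((\<lambda>t. y0 / (1 + \<bar>y0\<bar> * t)) \<longlongrightarrow> 0) at_top"
      by (intro tendsto_divide_0[OF tendsto_const] filterlim_at_top_imp_at_infinity)
    then show ?thesis unfolding \<phi>_def zero_prod_def by (intro tendsto_Pair) auto
  qed
qed

lemma basin_curve:
  assumes a: "a > 1" and x0: "x0 > 0" and y0: "y0 = ws a * x0 powr a"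
  shows "\<exists>\<phi>. fwd_solution (field_a a) (x0, y0) \<phi> \<and> (\<phi> \<longlongrightarrow> 0) at_top"
proof (rule goodI)
  define k where "k = 1 / (2 * (a - 1))"
  have k: "k > 0" using a by (simp add: k_def)
  define z where "z t = x0 powr (- a) + a * k * t" for t
  have zpos: "z t > 0" if "t \<ge> 0" for t
    unfolding z_def using a k that x0 by (intro add_pos_nonneg) auto
  define \<phi> where "\<phi> = (\<lambda>t. (z t powr (- 1 / a), ws a / z t))"
  show "fwd_solution (field_a a) (x0, y0) \<phi>"
    unfolding fwd_solution_def
  proof (intro conjI allI impI)
    have "(x0 powr (- a)) powr (- 1 / a) = x0" using a x0 by (simp add: powr_powr)
    moreover have "ws a / x0 powr (- a) = y0" using y0 x0 by (simp add: powr_minus divide_inverse)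
    ultimately show "\<phi> 0 = (x0, y0)" by (simp add: \<phi>_def z_def)
    fix t :: real assume t: "t \<ge> 0"
    have zp: "z t > 0" using zpos[OF t] .
    have dz: "(z has_real_derivative a * k) (at t within {0..})"
      unfolding z_def by (auto intro!: derivative_eq_intros)
    have d1: "((\<lambda>t. z t powr (- 1 / a)) has_real_derivative (- 1 / a) * z t powr (- 1 / a - 1) * (a * k)) (at t within {0..})"
      using DERIV_chain2[where f="\<lambda>z. z powr (- 1 / a)" and g=z, OF has_real_derivative_powr[OF zp] dz] by simp
    have d2: "((\<lambda>t. ws a / z t) has_real_derivative - (ws a * (a * k)) / (z t)^2) (at t within {0..})"
      using dz zp by (auto intro!: derivative_eq_intros simp: power2_eq_square field_simps)
    have xa: "\<bar>z t powr (- 1 / a)\<bar> powr a = 1 / z t"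
    proof -
      have "(z t powr (- 1 / a)) powr a = z t powr ((- 1 / a) * a)" by (simp add: powr_powr)
      also have "(- 1 / a) * a = -1" using a by simp
      finally show ?thesis using zp by (simp add: powr_minus divide_inverse)
    qed
    have e1: "(- 1 / a) * z t powr (- 1 / a - 1) * (a * k) = z t powr (- 1 / a) * (1 / z t - \<bar>ws a / z t\<bar>)"
    proof -
      have ws: "ws a > 0" using a by (simp add: ws_def)
      have h: "z t powr (- 1 / a - 1) = z t powr (- 1 / a) / z t"
        using zp by (simp add: powr_diff)
      define P where "P = z t powr (- 1 / a)"
      have eq: "(- 1 / a) * (P / z t) * (a * k) = P * (1 / z t - \<bar>ws a / z t\<bar>)"
        using zp a ws by (simp add: ws_def k_def abs_divide field_simps)
      show ?thesis unfolding h using eq[unfolded P_def] .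
    qed
    have e2: "- (ws a * (a * k)) / (z t)^2 = ws a / z t * ((1/2) * (1 / z t) - \<bar>ws a / z t\<bar>)"
    proof -
      have "ws a > 0" using a by (simp add: ws_def)
      then show ?thesis using zp a
        by (simp add: ws_def k_def abs_divide power2_eq_square field_simps)
    qed
    show "(\<phi> has_vector_derivative field_a a (\<phi> t)) (at t within {0..})"
      unfolding \<phi>_def field_eq xa e1[symmetric] e2[symmetric] using d1 d2 unfolding \<phi>_def
      by (intro has_vector_derivative_Pair) (auto simp: has_real_derivative_iff_has_vector_derivative)
  qed
  have zt: "filterlim z at_top at_top"
  proof -
    have "filterlim (\<lambda>t. (t + x0 powr (- a) / (a * k)) / (1 / (a * k))) at_top at_top"
      using a k by (intro filterlim_lin) simp
    moreover have "(\<lambda>t. (t + x0 powr (- a) / (a * k)) / (1 / (a * k))) = z"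
      using a k by (auto simp: z_def field_simps)
    ultimately show ?thesis by simp
  qed
  have "((\<lambda>t. z t powr (- 1 / a)) \<longlongrightarrow> 0) at_top"
    using a by (intro tendsto_neg_powr zt) simp
  moreover have "((\<lambda>t. ws a / z t) \<longlongrightarrow> 0) at_top"
    by (intro tendsto_divide_0[OF tendsto_const] filterlim_at_top_imp_at_infinity zt)
  ultimately show "(\<phi> \<longlongrightarrow> 0) at_top" unfolding \<phi>_def zero_prod_def by (intro tendsto_Pair)
qed

lemma powr_der:
  fixes f :: "real \<Rightarrow> real"
  assumes "f u > 0" "(f has_real_derivative f') (at u within s)"
  shows "((\<lambda>u. f u powr e) has_real_derivative e * (f u powr e / f u) * f') (at u within s)"
proof -
  have "((\<lambda>u. f u powr e) has_real_derivative e * f u powr (e - 1) * f') (at u within s)"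
    using DERIV_chain2[where f="\<lambda>z. z powr e" and g=f, OF has_real_derivative_powr[OF assms(1)] assms(2)] .
  moreover have "f u powr (e - 1) = f u powr e / f u" using assms(1) by (simp add: powr_diff)
  ultimately show ?thesis by simp
qed

locale Ectx =
  fixes a x0 y0 :: real
  assumes a: "a > 1" and x0: "x0 > 0" and gt: "y0 > ws a * x0 powr a"
begin

definition "Eq0 = y0 * x0 powr (- a)"
definition "Ec = Eq0 - ws a"
definition "Eal = 1 / (2 * a - 1)"
definition "Ebe = a / ((a - 1) * (2 * a - 1))"
definition "EK = y0 * Eq0 powr Eal * Ec powr Ebe"
definition "EY u = EK * (u + ws a) powr (- Eal) * u powr (- Ebe)"
definition "Exs u = (EY u / (u + ws a)) powr (1 / a)"
definition "Eg u = (a - 1) * EY u * u"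
definition "EYd u = EY u * (- Eal / (u + ws a) - Ebe / u)"
definition "Exsd u = (1 / a) * Exs u * (EYd u / EY u - 1 / (u + ws a))"

lemma ws_pos: "ws a > 0" using a by (simp add: ws_def)

lemma Eq0_gt: "Eq0 > ws a"
proof -
  have "x0 powr (- a) > 0" using x0 by simp
  then have "ws a * x0 powr a * x0 powr (- a) < y0 * x0 powr (- a)" using gt by simp
  moreover have "x0 powr a * x0 powr (- a) = 1" using x0 by (simp add: powr_minus)
  ultimately show ?thesis unfolding Eq0_def by (simp add: mult.assoc)
qed

lemma Ec_pos: "Ec > 0" using Eq0_gt by (simp add: Ec_def)
lemma Eq0_pos: "Eq0 > 0" using Eq0_gt ws_pos by simp
lemma y0_pos: "y0 > 0" using gt ws_pos x0 by (smt (verit) powr_gt_zero mult_pos_pos)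
lemma Eal_pos: "Eal > 0" using a by (simp add: Eal_def)
lemma Ebe_pos: "Ebe > 0" using a by (simp add: Ebe_def)
lemma EK_pos: "EK > 0" using y0_pos Eq0_pos Ec_pos by (simp add: EK_def)

lemma EY_pos: "u > 0 \<Longrightarrow> EY u > 0"
  using EK_pos ws_pos by (simp add: EY_def)
lemma Exs_pos: "u > 0 \<Longrightarrow> Exs u > 0"
proof -
  assume u: "u > 0"
  have "EY u / (u + ws a) > 0" using EY_pos[OF u] ws_pos u by simp
  then show ?thesis using EY_pos[OF u] ws_pos u by (simp add: Exs_def)
qed
lemma Eg_pos: "u > 0 \<Longrightarrow> Eg u > 0"
  using EY_pos a by (simp add: Eg_def)

lemma EY_c: "EY Ec = y0"
proof -
  have "Ec + ws a = Eq0" by (simp add: Ec_def)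
  then have "EY Ec = y0 * (Eq0 powr Eal * Eq0 powr (- Eal)) * (Ec powr Ebe * Ec powr (- Ebe))"
    by (simp add: EY_def EK_def mult_ac)
  also have "\<dots> = y0" using Eq0_pos Ec_pos by (simp add: powr_minus)
  finally show ?thesis .
qed

lemma Exs_c: "Exs Ec = x0"
proof -
  have "Ec + ws a = Eq0" by (simp add: Ec_def)
  moreover have "y0 / Eq0 = x0 powr a" using x0 y0_pos by (simp add: Eq0_def powr_minus field_simps)
  ultimately have "Exs Ec = (x0 powr a) powr (1 / a)" by (simp add: Exs_def EY_c)
  also have "\<dots> = x0" using a x0 by (simp add: powr_powr)
  finally show ?thesis .
qed

lemma gen_id: "(q::real) > 0 \<Longrightarrow> Y > 0 \<Longrightarrow> k \<noteq> 0 \<Longrightarrow>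
   (1 / k) * (X / (Y / q)) * ((Yd * q - Y * 1) / (q * q)) = (1 / k) * X * (Yd / Y - 1 / q)"
  by (simp add: field_simps)

lemma EY_der: "u > 0 \<Longrightarrow> (EY has_real_derivative EYd u) (at u)"
proof -
  assume u: "u > 0"
  have up: "u + ws a > 0" using u ws_pos by simp
  have d1: "((\<lambda>u. (u + ws a) powr (- Eal)) has_real_derivative (- Eal) * ((u + ws a) powr (- Eal) / (u + ws a)) * 1) (at u)"
    by (rule powr_der[where f="\<lambda>u. u + ws a", OF up]) (auto intro!: derivative_eq_intros)
  have d2: "((\<lambda>u. u powr (- Ebe)) has_real_derivative (- Ebe) * (u powr (- Ebe) / u) * 1) (at u)"
    by (rule powr_der[where f="\<lambda>u. u", OF u]) auto
  have D: "(EY has_real_derivative (EK * ((- Eal) * ((u + ws a) powr (- Eal) / (u + ws a)) * 1)) * u powr (- Ebe)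
          + ((- Ebe) * (u powr (- Ebe) / u) * 1) * (EK * (u + ws a) powr (- Eal))) (at u)"
    unfolding EY_def[abs_def] by (rule DERIV_mult[OF DERIV_cmult[OF d1] d2])
  have "(EK * ((- Eal) * ((u + ws a) powr (- Eal) / (u + ws a)) * 1)) * u powr (- Ebe)
          + ((- Ebe) * (u powr (- Ebe) / u) * 1) * (EK * (u + ws a) powr (- Eal)) = EYd u"
    unfolding EYd_def EY_def using u up by (simp add: field_simps)
  then show ?thesis using D by metis
qed

lemma Exs_der: "u > 0 \<Longrightarrow> (Exs has_real_derivative Exsd u) (at u)"
proof -
  assume u: "u > 0"
  have up: "u + ws a > 0" using u ws_pos by simp
  have hp: "EY u / (u + ws a) > 0" using EY_pos[OF u] up by simp
  have dh: "((\<lambda>u. EY u / (u + ws a)) has_real_derivative (EYd u * (u + ws a) - EY u * 1) / ((u + ws a) * (u + ws a))) (at u)"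
    using EY_der[OF u] up by (intro DERIV_divide) (auto intro!: derivative_eq_intros)
  have "(Exs has_real_derivative (1 / a) * ((EY u / (u + ws a)) powr (1 / a) / (EY u / (u + ws a))) *
          ((EYd u * (u + ws a) - EY u * 1) / ((u + ws a) * (u + ws a)))) (at u)"
    unfolding Exs_def[abs_def] by (rule powr_der[OF hp dh])
  moreover have "(1 / a) * ((EY u / (u + ws a)) powr (1 / a) / (EY u / (u + ws a))) *
          ((EYd u * (u + ws a) - EY u * 1) / ((u + ws a) * (u + ws a))) = Exsd u"
    unfolding Exsd_def Exs_def[symmetric] using gen_id[OF up EY_pos[OF u], of a "Exs u" "EYd u"] a by simp
  ultimately show ?thesis by metis
qed

lemma wsa: "(a - 1) * ws a = a - 1/2" using a by (simp add: ws_def)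
lemma AB1: "(a - 1) * Eal + (a - 1) * Ebe = 1"
proof -
  have a1: "a - 1 \<noteq> 0" "2 * a - 1 \<noteq> 0" using a by auto
  have e1: "(a - 1) * Eal = (a - 1) / (2 * a - 1)" unfolding Eal_def by simp
  have e2: "(a - 1) * Ebe = a / (2 * a - 1)" unfolding Ebe_def using a1 by simp
  have s: "(a - 1) / (2 * a - 1) + a / (2 * a - 1) = 1"
  proof -
    have "(a - 1) / (2 * a - 1) + a / (2 * a - 1) = (a - 1 + a) / (2 * a - 1)" by (rule add_divide_distrib[symmetric])
    also have "a - 1 + a = 2 * a - 1" by simp
    finally show ?thesis using a1 by simp
  qed
  show ?thesis unfolding e1 e2 by (rule s)
qed
lemma AB2: "(a - 1) * Eal * ws a = 1/2"
proof -
  have a1: "a - 1 \<noteq> 0" "2 * a - 1 \<noteq> 0" using a by auto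
  have h: "a - 1/2 = (2 * a - 1) / 2" by simp
  have "(a - 1) * Eal * ws a = (a - 1) * (1 / (2 * a - 1)) * (((2 * a - 1) / 2) / (a - 1))"
    unfolding Eal_def ws_def h ..
  also have "\<dots> = 1/2" using a1 by simp
  finally show ?thesis .
qed

lemma key_id: "u > 0 \<Longrightarrow> (a - 1) * (- Eal * u / (u + ws a) - Ebe) = 1 / (2 * (u + ws a)) - 1"
proof -
  assume u: "u > 0"
  define q where "q = u + ws a"
  have qp: "q > 0" using u ws_pos by (simp add: q_def)
  define A where "A = (a - 1) * Eal"
  define B where "B = (a - 1) * Ebe"
  have AB: "A + B = 1" "A * ws a = 1/2" using AB1 AB2 by (auto simp: A_def B_def)
  have "(a - 1) * (- Eal * u / q - Ebe) = - A * u / q - B" using qp by (simp add: A_def B_def field_simps)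
  also have "\<dots> = (- A * u - B * q) / q" using qp by (simp add: field_simps)
  also have "- A * u - B * q = - (A + B) * q + A * ws a" by (simp add: q_def algebra_simps)
  also have "\<dots> = 1/2 - q" using AB by simp
  also have "(1/2 - q) / q = 1 / (2 * q) - 1" using qp by (simp add: field_simps)
  finally show ?thesis by (simp add: q_def)
qed

lemma Exsa: "u > 0 \<Longrightarrow> \<bar>Exs u\<bar> powr a = EY u / (u + ws a)"
proof -
  assume u: "u > 0"
  have p: "EY u / (u + ws a) > 0" using EY_pos[OF u] ws_pos u by simp
  have "\<bar>Exs u\<bar> = Exs u" using Exs_pos[OF u] by simp
  then have "\<bar>Exs u\<bar> powr a = (EY u / (u + ws a)) powr ((1 / a) * a)"
    by (simp add: Exs_def powr_powr)
  also have "(1 / a) * a = 1" using a by simp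
  finally show ?thesis using p EY_pos[OF u] ws_pos u by simp
qed

lemma EY_ode: "u > 0 \<Longrightarrow> EYd u * Eg u = EY u * ((1/2) * \<bar>Exs u\<bar> powr a - \<bar>EY u\<bar>)"
proof -
  assume u: "u > 0"
  have up: "u + ws a > 0" using u ws_pos by simp
  have Y: "EY u > 0" using EY_pos[OF u] .
  have h: "(- Eal / (u + ws a) - Ebe / u) * u = - Eal * u / (u + ws a) - Ebe"
    using u by (simp add: left_diff_distrib)
  have "EYd u * Eg u = EY u * EY u * ((a - 1) * ((- Eal / (u + ws a) - Ebe / u) * u))"
    unfolding EYd_def Eg_def by (simp add: mult_ac)
  also have "\<dots> = EY u * EY u * (1 / (2 * (u + ws a)) - 1)" unfolding h key_id[OF u] ..
  also have "\<dots> = EY u * ((1/2) * \<bar>Exs u\<bar> powr a - \<bar>EY u\<bar>)"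
    unfolding Exsa[OF u] using Y up by (simp add: field_simps)
  finally show ?thesis .
qed

lemma Exs_ode: "u > 0 \<Longrightarrow> Exsd u * Eg u = Exs u * (\<bar>Exs u\<bar> powr a - \<bar>EY u\<bar>)"
proof -
  assume u: "u > 0"
  define q where "q = u + ws a"
  have qp: "q > 0" using u ws_pos by (simp add: q_def)
  have Y: "EY u > 0" using EY_pos[OF u] .
  have h0: "EYd u / EY u = - Eal / q - Ebe / u" using Y by (simp add: EYd_def q_def)
  have h1: "(EYd u / EY u - 1 / q) * u = - Eal * u / q - Ebe - u / q"
    unfolding h0 using u by (simp add: left_diff_distrib)
  have "Exsd u * Eg u = Exs u * EY u * ((1 / a) * ((a - 1) * ((EYd u / EY u - 1 / q) * u)))"
    unfolding Exsd_def Eg_def q_def by (simp add: mult_ac)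
  also have "(a - 1) * ((EYd u / EY u - 1 / q) * u) = (a - 1) * (- Eal * u / q - Ebe) - (a - 1) * u / q"
    unfolding h1 by (simp add: algebra_simps)
  also have "\<dots> = 1 / (2 * q) - 1 - (a - 1) * u / q" using key_id[OF u] by (simp add: q_def)
  also have "(a - 1) * u = (a - 1) * q - (a - 1/2)" using wsa by (simp add: q_def algebra_simps)
  also have "1 / (2 * q) - 1 - ((a - 1) * q - (a - 1/2)) / q = a * (1 / q - 1)"
    using qp by (simp add: field_simps)
  also have "Exs u * EY u * ((1 / a) * (a * (1 / q - 1))) = Exs u * (EY u / q - EY u)" using a by (simp add: algebra_simps)
  also have "\<dots> = Exs u * (\<bar>Exs u\<bar> powr a - \<bar>EY u\<bar>)"
    unfolding Exsa[OF u] using Y by (simp add: q_def)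
  finally show ?thesis .
qed

end

context Ectx begin

definition "ET u = integral {Ec/2..u} (\<lambda>v. 1 / Eg v) - integral {Ec/2..Ec} (\<lambda>v. 1 / Eg v)"
definition "Etau = inv_into {Ec/2<..} ET"

lemma EY_isCont: "v > 0 \<Longrightarrow> isCont EY v"
  using EY_der by (blast intro: DERIV_isCont)

lemma invEg_isCont: "v > 0 \<Longrightarrow> isCont (\<lambda>v. 1 / Eg v) v"
proof -
  assume v: "v > 0"
  have "Eg v \<noteq> 0" using Eg_pos[OF v] by simp
  then show ?thesis unfolding Eg_def using EY_isCont[OF v] by (intro continuous_intros) auto
qed

lemma invEg_cont: "r > 0 \<Longrightarrow> continuous_on {r..s} (\<lambda>v. 1 / Eg v)"
  by (intro continuous_at_imp_continuous_on ballI invEg_isCont) auto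

lemma ET_der: "u > Ec / 2 \<Longrightarrow> (ET has_real_derivative 1 / Eg u) (at u)"
proof -
  assume u: "u > Ec / 2"
  have c2: "Ec / 2 > 0" using Ec_pos by simp
  have "((\<lambda>u. integral {Ec/2..u} (\<lambda>v. 1 / Eg v)) has_vector_derivative 1 / Eg u) (at u within {Ec/2..u+1})"
    using u by (intro integral_has_vector_derivative invEg_cont c2) auto
  moreover have "at u within {Ec/2..u+1} = at u"
    using u by (intro at_within_interior) auto
  ultimately have "((\<lambda>u. integral {Ec/2..u} (\<lambda>v. 1 / Eg v)) has_real_derivative 1 / Eg u) (at u)"
    by (simp add: has_real_derivative_iff_has_vector_derivative)
  then have "((\<lambda>u. integral {Ec/2..u} (\<lambda>v. 1 / Eg v) - integral {Ec/2..Ec} (\<lambda>v. 1 / Eg v)) has_real_derivative 1 / Eg u - 0) (at u)"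
    by (intro DERIV_diff DERIV_const)
  then show ?thesis by (simp add: ET_def[abs_def])
qed

lemma ET_isCont: "u > Ec / 2 \<Longrightarrow> isCont ET u"
  using ET_der by (blast intro: DERIV_isCont)

lemma ET_c: "ET Ec = 0" by (simp add: ET_def)

lemma ET_mono: assumes "Ec / 2 < u" "u < v" shows "ET u < ET v"
proof (rule DERIV_pos_imp_increasing[OF assms(2)])
  fix x assume "u \<le> x" "x \<le> v"
  then have x: "x > Ec / 2" "x > 0" using Ec_pos assms(1) by auto
  show "\<exists>y. DERIV ET x :> y \<and> 0 < y"
    using ET_der[OF x(1)] Eg_pos[OF x(2)] by auto
qed

lemma ET_inj: "inj_on ET {Ec/2<..}"
proof (rule inj_onI)
  fix u v assume "u \<in> {Ec/2<..}" "v \<in> {Ec/2<..}" "ET u = ET v"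
  then show "u = v" using ET_mono[of u v] ET_mono[of v u]
    by (cases u v rule: linorder_cases) auto
qed

lemma Etau_ET: "u > Ec / 2 \<Longrightarrow> Etau (ET u) = u"
  unfolding Etau_def by (rule inv_into_f_f[OF ET_inj]) auto

lemma ET_lower: "u \<ge> Ec \<Longrightarrow> ET u \<ge> 1 / EY u - 1 / y0"
proof -
  assume u: "u \<ge> Ec"
  define D where "D x = ET x - inverse (EY x)" for x
  have dD: "\<exists>y. DERIV D x :> y \<and> 0 \<le> y" if x: "x > Ec / 2" for x
  proof -
    have xp: "x > 0" using x Ec_pos by simp
    have Y: "EY x > 0" using EY_pos[OF xp] .
    have d: "(D has_real_derivative 1 / Eg x - (- (EYd x * inverse (EY x ^ Suc (Suc 0))))) (at x)"
      unfolding D_def[abs_def] using Y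
      by (intro DERIV_diff ET_der x DERIV_inverse_fun EY_der xp) auto
    define Z where "Z = - Eal / (x + ws a) - Ebe / x"
    have Zx: "Z * x = - Eal * x / (x + ws a) - Ebe"
      using xp by (simp add: Z_def left_diff_distrib)
    have a1: "a \<noteq> 1" using a by simp
    have g: "1 / (k * Yv * xv) - (- (Yv * Zv * inverse (Yv ^ Suc (Suc 0)))) = (1 + k * (Zv * xv)) / (k * Yv * xv)"
      if "k \<noteq> 0" "Yv \<noteq> 0" "xv \<noteq> 0" for k Yv Zv xv :: real
    proof -
      have "Yv * Zv * inverse (Yv ^ Suc (Suc 0)) = Zv / Yv" using that by (simp add: divide_inverse)
      moreover have "1 / (k * Yv * xv) + Zv / Yv = (1 + k * (Zv * xv)) / (k * Yv * xv)"
        using that by (simp add: field_simps)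
      ultimately show ?thesis by simp
    qed
    have "1 / Eg x - (- (EYd x * inverse (EY x ^ Suc (Suc 0)))) = (1 + (a - 1) * (Z * x)) / Eg x"
    proof -
      have e1: "EYd x = EY x * Z" unfolding EYd_def Z_def ..
      have e2: "Eg x = (a - 1) * EY x * x" unfolding Eg_def ..
      show ?thesis unfolding e1 e2 by (rule g) (use xp Y a1 in auto)
    qed
    also have "(a - 1) * (Z * x) = 1 / (2 * (x + ws a)) - 1" unfolding Zx using key_id[OF xp] .
    finally have "1 / Eg x - (- (EYd x * inverse (EY x ^ Suc (Suc 0)))) = (1 / (2 * (x + ws a))) / Eg x"
      by simp
    moreover have "(1 / (2 * (x + ws a))) / Eg x \<ge> 0" using Eg_pos[OF xp] ws_pos xp by simp
    ultimately show ?thesis using d by auto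
  qed
  have "D Ec \<le> D u"
  proof (rule DERIV_nonneg_imp_increasing_open[OF u])
    fix x assume "Ec < x" "x < u"
    then show "\<exists>y. DERIV D x :> y \<and> 0 \<le> y" using dD Ec_pos by auto
  next
    show "continuous_on {Ec..u} D"
      using dD Ec_pos by (intro continuous_at_imp_continuous_on ballI) (force intro: DERIV_isCont)
  qed
  then show ?thesis unfolding D_def using ET_c EY_c by (simp add: divide_inverse)
qed

lemma EY_lim: "(EY \<longlongrightarrow> 0) at_top"
proof -
  have f1: "filterlim (\<lambda>u. (u + ws a) / 1) at_top at_top" by (rule filterlim_lin) simp
  have "((\<lambda>u. (u + ws a) powr (- Eal)) \<longlongrightarrow> 0) at_top"
    using f1 Eal_pos by (intro tendsto_neg_powr) auto
  moreover have "((\<lambda>u. u powr (- Ebe)) \<longlongrightarrow> 0) at_top"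
    using Ebe_pos by (intro tendsto_neg_powr filterlim_ident) auto
  ultimately have "((\<lambda>u. EK * (u + ws a) powr (- Eal) * u powr (- Ebe)) \<longlongrightarrow> EK * 0 * 0) at_top"
    by (intro tendsto_mult tendsto_const)
  then show ?thesis by (simp add: EY_def[abs_def])
qed

lemma Exs_lim: "(Exs \<longlongrightarrow> 0) at_top"
proof -
  have f1: "filterlim (\<lambda>u. (u + ws a) / 1) at_top at_top" by (rule filterlim_lin) simp
  have "((\<lambda>u. EY u / (u + ws a)) \<longlongrightarrow> 0) at_top"
    using f1 by (intro tendsto_divide_0[OF EY_lim] filterlim_at_top_imp_at_infinity) simp
  moreover have "\<forall>\<^sub>F u in at_top. 0 \<le> EY u / (u + ws a)"
    using eventually_gt_at_top[of 0] by eventually_elim (use EY_pos ws_pos in \<open>auto intro: less_imp_le\<close>)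
  ultimately have "((\<lambda>u. (EY u / (u + ws a)) powr (1 / a)) \<longlongrightarrow> 0) at_top"
    using a by (intro tendsto_zero_powrI[where b="1/a"]) auto
  then show ?thesis by (simp add: Exs_def[abs_def])
qed

lemma ET_surj: "t \<ge> 0 \<Longrightarrow> \<exists>u\<ge>Ec. ET u = t"
proof -
  assume t: "t \<ge> 0"
  have bp: "1 / (t + 1 / y0) > 0" using t y0_pos by (simp add: add_nonneg_pos)
  have "\<forall>\<^sub>F u in at_top. EY u < 1 / (t + 1 / y0)"
    using order_tendstoD(2)[OF EY_lim bp] .
  then obtain N where N: "\<And>u. u \<ge> N \<Longrightarrow> EY u < 1 / (t + 1 / y0)"
    by (auto simp: eventually_at_top_linorder)
  define u where "u = max N Ec"
  have u: "u \<ge> Ec" "u \<ge> N" by (auto simp: u_def)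
  have up: "u > 0" using u Ec_pos by simp
  have "EY u < 1 / (t + 1 / y0)" using N u by simp
  then have "inverse (inverse (t + 1 / y0)) < inverse (EY u)"
    using EY_pos[OF up] by (intro less_imp_inverse_less) (auto simp: divide_inverse)
  moreover have "t + 1 / y0 > 0" using t y0_pos by (simp add: add_nonneg_pos)
  ultimately have "1 / EY u > t + 1 / y0" by (simp add: divide_inverse)
  then have "ET u \<ge> t" using ET_lower[OF u(1)] by simp
  moreover have "ET Ec \<le> t" using ET_c t by simp
  ultimately obtain x where "Ec \<le> x" "x \<le> u" "ET x = t"
    using IVT[of ET Ec t u] u Ec_pos ET_isCont by force
  then show ?thesis by auto
qed

lemma Etau_props: "t \<ge> 0 \<Longrightarrow> Etau t \<ge> Ec \<and> ET (Etau t) = t"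
proof -
  assume "t \<ge> 0"
  then obtain u where u: "u \<ge> Ec" "ET u = t" using ET_surj by blast
  have "Etau t = u" using Etau_ET[of u] u Ec_pos by simp
  then show ?thesis using u by simp
qed

lemma Etau_der: "t \<ge> 0 \<Longrightarrow> (Etau has_real_derivative Eg (Etau t)) (at t)"
proof -
  assume t: "t \<ge> 0"
  define u where "u = Etau t"
  have u: "u \<ge> Ec" "ET u = t" using Etau_props[OF t] by (auto simp: u_def)
  have uS: "u \<in> {Ec/2<..}" using u Ec_pos by simp
  have gp: "Eg u > 0" using Eg_pos u Ec_pos by simp
  have "(Etau has_derivative (*) (Eg u)) (at (ET u))"
  proof (rule has_derivative_inverse_strong[of "{Ec/2<..}" u ET Etau "(*) (1 / Eg u)"])
    show "continuous_on {Ec/2<..} ET"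
      by (intro continuous_at_imp_continuous_on ballI ET_isCont) auto
    show "\<And>x. x \<in> {Ec/2<..} \<Longrightarrow> Etau (ET x) = x" using Etau_ET by auto
    show "(ET has_derivative (*) (1 / Eg u)) (at u)"
      using ET_der[of u] uS by (simp add: has_field_derivative_def)
    show "(*) (1 / Eg u) \<circ> (*) (Eg u) = id" using gp by (auto simp: fun_eq_iff)
  qed (use uS in auto)
  then show ?thesis using u by (simp add: has_field_derivative_def u_def)
qed

lemma Etau0: "Etau 0 = Ec"
  using Etau_ET[of Ec] ET_c Ec_pos by simp

lemma Etau_lim: "filterlim Etau at_top at_top"
  unfolding filterlim_at_top eventually_at_top_linorder
proof (intro allI)
  fix Z :: real
  define M where "M = max Z Ec"
  show "\<exists>N. \<forall>t\<ge>N. Z \<le> Etau t"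
  proof (intro exI[of _ "max 0 (ET M)"] allI impI)
    fix t assume t: "t \<ge> max 0 (ET M)"
    have p: "Etau t \<ge> Ec" "ET (Etau t) = t" using Etau_props[of t] t by auto
    have "M \<le> Etau t"
    proof (rule ccontr)
      assume "\<not> M \<le> Etau t"
      then have "ET (Etau t) < ET M" using p Ec_pos by (intro ET_mono) auto
      then show False using p t by simp
    qed
    then show "Z \<le> Etau t" by (simp add: M_def)
  qed
qed

theorem basin_main: "\<exists>\<phi>. fwd_solution (field_a a) (x0, y0) \<phi> \<and> (\<phi> \<longlongrightarrow> 0) at_top"
proof (rule goodI)
  define \<phi> where "\<phi> = (\<lambda>t. (Exs (Etau t), EY (Etau t)))"
  show "fwd_solution (field_a a) (x0, y0) \<phi>"
    unfolding fwd_solution_def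
  proof (intro conjI allI impI)
    show "\<phi> 0 = (x0, y0)" by (simp add: \<phi>_def Etau0 Exs_c EY_c)
    fix t :: real assume t: "t \<ge> 0"
    define u where "u = Etau t"
    have up: "u > 0" using Etau_props[OF t] Ec_pos by (simp add: u_def)
    have dX: "((\<lambda>t. Exs (Etau t)) has_real_derivative Exsd u * Eg u) (at t within {0..})"
      unfolding u_def by (rule has_field_derivative_at_within[OF DERIV_chain2[OF Exs_der Etau_der[OF t]]]) (use up u_def in simp)
    have dY: "((\<lambda>t. EY (Etau t)) has_real_derivative EYd u * Eg u) (at t within {0..})"
      unfolding u_def by (rule has_field_derivative_at_within[OF DERIV_chain2[OF EY_der Etau_der[OF t]]]) (use up u_def in simp)
    have e: "field_a a (\<phi> t) = (Exsd u * Eg u, EYd u * Eg u)"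
      unfolding \<phi>_def u_def[symmetric] field_eq Exs_ode[OF up] EY_ode[OF up] ..
    show "(\<phi> has_vector_derivative field_a a (\<phi> t)) (at t within {0..})"
      unfolding e unfolding \<phi>_def using dX dY
      by (intro has_vector_derivative_Pair) (auto simp: has_real_derivative_iff_has_vector_derivative)
  qed
  have "((\<lambda>t. Exs (Etau t)) \<longlongrightarrow> 0) at_top" by (rule filterlim_compose[OF Exs_lim Etau_lim])
  moreover have "((\<lambda>t. EY (Etau t)) \<longlongrightarrow> 0) at_top" by (rule filterlim_compose[OF EY_lim Etau_lim])
  ultimately show "(\<phi> \<longlongrightarrow> 0) at_top" unfolding \<phi>_def zero_prod_def by (intro tendsto_Pair)
qed

end

lemma cbox_meas:
  fixes x1 x2 y1 y2 :: real
  assumes "x1 \<le> x2" "y1 \<le> y2"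
  shows "measure lebesgue (cbox (x1, y1) (x2, y2)) = (x2 - x1) * (y2 - y1)"
proof -
  have "measure lebesgue (cbox (x1, y1) (x2, y2)) = measure lborel (cbox (x1, y1) (x2, y2))"
    by (simp add: measure_completion)
  also have "\<dots> = (x2 - x1) * (y2 - y1)"
    using assms by (simp add: content_Pair content_real)
  finally show ?thesis .
qed

lemma ball_meas:
  assumes "r \<ge> 0"
  shows "measure lebesgue (ball (0 :: real \<times> real) r) = pi * r ^ 2"
proof -
  have "measure lebesgue (ball (0 :: real \<times> real) r) = measure lborel (ball (0 :: real \<times> real) r)"
    by (simp add: measure_completion)
  also have "\<dots> = pi * r ^ 2" using assms by (simp add: content_ball unit_ball_vol_2 power2_eq_square)
  finally show ?thesis .
qed

locale Mctx =
  fixes a :: real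
  assumes a: "a > 1"
begin

definition "Bs = {p :: real \<times> real. ws a * \<bar>fst p\<bar> powr a \<le> \<bar>snd p\<bar>}"
definition "Cs = {p :: real \<times> real. \<bar>snd p\<bar> < ws a * \<bar>fst p\<bar> powr a}"
definition "mC r = measure lebesgue (ball (0 :: real \<times> real) r \<inter> Cs)"

lemma wsp: "ws a > 0" using a by (simp add: ws_def)

lemma contf: "continuous_on UNIV (\<lambda>p :: real \<times> real. ws a * \<bar>fst p\<bar> powr a)"
  using a by (intro continuous_intros continuous_on_powr') auto

lemma Bs_leb: "Bs \<in> sets lebesgue"
proof -
  have "closed Bs" unfolding Bs_def
    by (intro closed_Collect_le contf continuous_intros)
  then show ?thesis by simp
qed

lemma Cs_leb: "Cs \<in> sets lebesgue"
proof -
  have "open Cs" unfolding Cs_def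
    by (intro open_Collect_less contf continuous_intros)
  then show ?thesis by simp
qed

lemma ballC_lmeas: "ball 0 r \<inter> Cs \<in> lmeasurable"
  by (intro bounded_set_imp_lmeasurable bounded_Int sets.Int Cs_leb) auto

lemma mC_mono: "r \<le> s \<Longrightarrow> mC r \<le> mC s"
  unfolding mC_def using Cs_leb
  by (intro measure_mono_fmeasurable ballC_lmeas) auto

lemma mC_upper: "r > 0 \<Longrightarrow> mC r \<le> 4 * ws a * r powr (a + 1)"
proof -
  assume r: "r > 0"
  define h where "h = ws a * r powr a"
  have h: "h \<ge> 0" using wsp by (simp add: h_def)
  have sub: "ball 0 r \<inter> Cs \<subseteq> cbox (- r, - h) (r, h)"
  proof
    fix p :: "real \<times> real" assume p: "p \<in> ball 0 r \<inter> Cs"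
    obtain x y where xy: "p = (x, y)" by fastforce
    have "norm x \<le> norm (x, y)" by (rule norm_fst_le)
    then have xr: "\<bar>x\<bar> < r" using p xy by simp
    have "\<bar>y\<bar> < ws a * \<bar>x\<bar> powr a" using p xy by (simp add: Cs_def)
    also have "\<dots> \<le> ws a * r powr a" using xr wsp a
      by (intro mult_left_mono powr_mono2) auto
    finally show "p \<in> cbox (- r, - h) (r, h)" using xy xr by (auto simp: h_def cbox_Pair_iff)
  qed
  have "mC r \<le> measure lebesgue (cbox (- r, - h) (r, h))"
    unfolding mC_def using sub Cs_leb by (intro measure_mono_fmeasurable) auto
  also have "\<dots> = (r - - r) * (h - - h)" using r h by (intro cbox_meas) auto
  also have "\<dots> = 4 * ws a * (r * r powr a)" by (simp add: h_def)
  also have "r * r powr a = r powr (a + 1)" using r by (simp add: powr_add)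
  finally show ?thesis by simp
qed

lemma small: "\<forall>\<^sub>F r in at_right 0. ws a * (r / 4) powr (a - 1) \<le> 2"
proof -
  have "((\<lambda>r. ws a * (r / 4) powr (a - 1)) \<longlongrightarrow> ws a * 0) (at_right 0)"
  proof (intro tendsto_mult tendsto_const tendsto_zero_powrI)
    show "((\<lambda>r::real. r / 4) \<longlongrightarrow> 0) (at_right 0)"
      by (auto intro!: tendsto_eq_intros)
    show "((\<lambda>r. a - 1) \<longlongrightarrow> a - 1) (at_right 0)" by simp
    show "\<forall>\<^sub>F r in at_right 0. 0 \<le> r / (4::real)"
      by (simp add: eventually_at_right_field) (auto intro: exI[of _ 1])
    show "0 < a - 1" using a by simp
  qed
  then have "\<forall>\<^sub>F r in at_right 0. ws a * (r / 4) powr (a - 1) < 2"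
    by (intro order_tendstoD(2)) auto
  then show ?thesis by eventually_elim simp
qed

lemma mC_lower: "\<forall>\<^sub>F r in at_right 0. mC r \<ge> ws a / 4 powr (a + 1) * r powr (a + 1)"
proof -
  have "\<forall>\<^sub>F r in at_right 0. r > (0::real)" by (rule eventually_at_right_less)
  with small show ?thesis
  proof eventually_elim
    case (elim r)
    then have r: "r > 0" and sm: "ws a * (r / 4) powr (a - 1) \<le> 2" by auto
    define h where "h = ws a * (r / 4) powr a"
    have hp: "h > 0" using wsp r by (simp add: h_def)
    have "(r / 4) powr a = (r / 4) powr (a - 1) * (r / 4)"
      using r by (simp add: powr_diff)
    then have "h = (ws a * (r / 4) powr (a - 1)) * (r / 4)"
      unfolding h_def by (simp add: mult.assoc)
    also have "\<dots> \<le> 2 * (r / 4)" using sm r by (intro mult_right_mono) auto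
    finally have hle: "h \<le> r / 2" by simp
    have sub: "cbox (r / 4, - h / 2) (r / 2, h / 2) \<subseteq> ball 0 r \<inter> Cs"
    proof
      fix p :: "real \<times> real" assume p: "p \<in> cbox (r / 4, - h / 2) (r / 2, h / 2)"
      obtain x y where xy: "p = (x, y)" by fastforce
      have x: "r / 4 \<le> x" "x \<le> r / 2" and y: "\<bar>y\<bar> \<le> h / 2" using p xy by (auto simp: cbox_Pair_iff)
      have "norm (x, y) \<le> norm x + norm y" by (rule norm_Pair_le)
      also have "\<dots> < r" using x y hle r by simp
      finally have "p \<in> ball 0 r" using xy by (simp add: mem_ball_0)
      moreover have "\<bar>y\<bar> < ws a * \<bar>x\<bar> powr a"
      proof -
        have "\<bar>y\<bar> < h" using y hp by simp
        also have "h \<le> ws a * \<bar>x\<bar> powr a" unfolding h_def using x r wsp a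
          by (intro mult_left_mono powr_mono2) auto
        finally show ?thesis .
      qed
      ultimately show "p \<in> ball 0 r \<inter> Cs" using xy by (simp add: Cs_def)
    qed
    have le: "measure lebesgue (cbox (r / 4, - h / 2) (r / 2, h / 2)) \<le> mC r"
      unfolding mC_def using sub by (intro measure_mono_fmeasurable ballC_lmeas) auto
    have e1: "measure lebesgue (cbox (r / 4, - h / 2) (r / 2, h / 2)) = (r / 2 - r / 4) * (h / 2 - - h / 2)"
      using r hp by (intro cbox_meas) auto
    have e2: "(r / 2 - r / 4) * (h / 2 - - h / 2) = ws a / 4 powr (a + 1) * r powr (a + 1)"
    proof -
      have "(r / 2 - r / 4) * (h / 2 - - h / 2) = ws a * ((r / 4) * (r / 4) powr a)" by (simp add: h_def)
      also have "(r / 4) * (r / 4) powr a = (r / 4) powr (a + 1)" using r by (simp add: powr_add)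
      also have "\<dots> = r powr (a + 1) / 4 powr (a + 1)" using r by (simp add: powr_divide)
      finally show ?thesis by simp
    qed
    show ?case using le e1 e2 by linarith
  qed
qed

end

lemma good_reflect:
  assumes g: "\<exists>\<phi>. fwd_solution (field_a a) (x0, y0) \<phi> \<and> (\<phi> \<longlongrightarrow> 0) at_top"
    and s1: "\<bar>s1\<bar> = (1::real)" and s2: "\<bar>s2\<bar> = (1::real)"
  shows "\<exists>\<phi>. fwd_solution (field_a a) (s1 * x0, s2 * y0) \<phi> \<and> (\<phi> \<longlongrightarrow> 0) at_top"
proof -
  obtain \<phi> where p: "fwd_solution (field_a a) (x0, y0) \<phi>" "(\<phi> \<longlongrightarrow> 0) at_top" using g by blast
  have "((\<lambda>t. fst (\<phi> t)) \<longlongrightarrow> 0) at_top" using tendsto_fst[OF p(2)] by simp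
  moreover have "((\<lambda>t. snd (\<phi> t)) \<longlongrightarrow> 0) at_top" using tendsto_snd[OF p(2)] by simp
  ultimately have "((\<lambda>t. (s1 * fst (\<phi> t), s2 * snd (\<phi> t))) \<longlongrightarrow> (s1 * 0, s2 * 0)) at_top"
    by (intro tendsto_Pair tendsto_mult tendsto_const)
  then have "((\<lambda>t. (s1 * fst (\<phi> t), s2 * snd (\<phi> t))) \<longlongrightarrow> 0) at_top" by (simp add: zero_prod_def)
  then show ?thesis using refl_sol[OF p(1) s1 s2] by blast
qed

lemma basin_eq:
  assumes a: "a > 1"
  shows "basin (field_a a) {0} = Mctx.Bs a"
proof
  show "Mctx.Bs a \<subseteq> basin (field_a a) {0}"
  proof
    fix p assume "p \<in> Mctx.Bs a"
    then obtain x y where xy: "p = (x, y)" and le: "ws a * \<bar>x\<bar> powr a \<le> \<bar>y\<bar>"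
      unfolding Mctx.Bs_def[OF Mctx.intro[OF a]] by (cases p) auto
    have "\<exists>\<phi>. fwd_solution (field_a a) (x, y) \<phi> \<and> (\<phi> \<longlongrightarrow> 0) at_top"
    proof (cases "x = 0")
      case True then show ?thesis using basin_axis by simp
    next
      case False
      have wsp: "ws a > 0" using a by (simp add: ws_def)
      have ax: "\<bar>x\<bar> > 0" using False by simp
      then have "ws a * \<bar>x\<bar> powr a > 0" using wsp by simp
      then have y0: "y \<noteq> 0" using le by auto
      have g: "\<exists>\<phi>. fwd_solution (field_a a) (\<bar>x\<bar>, \<bar>y\<bar>) \<phi> \<and> (\<phi> \<longlongrightarrow> 0) at_top"
      proof (cases "\<bar>y\<bar> = ws a * \<bar>x\<bar> powr a")
        case True then show ?thesis using basin_curve[OF a ax True] by simp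
      next
        case False
        then have "\<bar>y\<bar> > ws a * \<bar>x\<bar> powr a" using le by simp
        then show ?thesis using Ectx.basin_main[OF Ectx.intro[OF a ax]] by simp
      qed
      have "\<exists>\<phi>. fwd_solution (field_a a) (sgn x * \<bar>x\<bar>, sgn y * \<bar>y\<bar>) \<phi> \<and> (\<phi> \<longlongrightarrow> 0) at_top"
        using good_reflect[OF g] False y0 by (simp add: abs_sgn_eq)
      then show ?thesis by (simp add: sgn_mult_abs)
    qed
    then show "p \<in> basin (field_a a) {0}" unfolding xy using in_basin by blast
  qed
next
  show "basin (field_a a) {0} \<subseteq> Mctx.Bs a"
  proof
    fix p assume p: "p \<in> basin (field_a a) {0}"
    obtain x y where xy: "p = (x, y)" by fastforce
    obtain \<phi> where sol: "fwd_solution (field_a a) (x, y) \<phi>" using p xy unfolding basin_def by auto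
    show "p \<in> Mctx.Bs a"
    proof (rule ccontr)
      assume "p \<notin> Mctx.Bs a"
      then have lt: "\<bar>y\<bar> < ws a * \<bar>x\<bar> powr a"
        unfolding Mctx.Bs_def[OF Mctx.intro[OF a]] xy by simp
      have x0: "x \<noteq> 0" using lt by (cases "x = 0") auto
      define s1 where "s1 = sgn x"
      define s2 where "s2 = (if y = 0 then 1 else sgn y)"
      have s: "\<bar>s1\<bar> = 1" "\<bar>s2\<bar> = (1::real)" using x0 by (auto simp: s1_def s2_def abs_sgn_eq)
      have e: "s1 * x = \<bar>x\<bar>" "s2 * y = \<bar>y\<bar>" by (auto simp: s1_def s2_def sgn_if)
      have "fwd_solution (field_a a) (\<bar>x\<bar>, \<bar>y\<bar>) (\<lambda>t. (s1 * fst (\<phi> t), s2 * snd (\<phi> t)))"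
        using refl_sol[OF sol s] e by simp
      then show False using nonexist[OF a _ _ lt] x0 by simp
    qed
  qed
qed

lemma Sig_eq:
  assumes a: "a > 1" and r: "r > 0"
  shows "Sigma_eps (basin (field_a a) {0}) (0 :: real \<times> real) r = 1 - Mctx.mC a r / (pi * r^2)"
proof -
  interpret Mctx a by (rule Mctx.intro[OF a])
  have eqset: "ball 0 r \<inter> Bs = ball 0 r - (ball 0 r \<inter> Cs)" by (auto simp: Bs_def Cs_def)
  have "measure lebesgue (ball (0::real\<times>real) r \<inter> Bs) = measure lebesgue (ball (0::real\<times>real) r) - mC r"
  proof -
    have fin: "emeasure lebesgue (ball (0::real\<times>real) r) \<noteq> \<infinity>"
      using lmeasurable_ball[of "0::real\<times>real" r] by (auto simp: fmeasurable_def)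
    have "ball (0::real\<times>real) r \<inter> Cs \<in> sets lebesgue" using Cs_leb by auto
    then show ?thesis unfolding mC_def eqset
      by (intro measure_Diff[OF fin]) auto
  qed
  moreover have "measure lebesgue (ball (0::real\<times>real) r) = pi * r^2" using r by (intro ball_meas) simp
  moreover have "pi * r^2 > 0" using r by simp
  ultimately show ?thesis unfolding Sigma_eps_def basin_eq[OF a] using r by (simp add: diff_divide_distrib)
qed

lemma ln_inf: "LIM r at_right 0. ln (r::real) :> at_infinity"
  by (rule filterlim_mono[OF ln_at_0 at_bot_le_at_infinity order_refl])

context Mctx
begin

definition "k1 = ws a / 4 powr (a + 1)"
definition "k2 = 4 * ws a"
definition "ff r = mC r / (pi * r^2)"

lemma k_pos: "k1 > 0" "k2 > 0" using wsp by (auto simp: k1_def k2_def)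

lemma pw0: "((\<lambda>r. r powr (a - 1)) \<longlongrightarrow> 0) (at_right 0)"
proof (rule tendsto_zero_powrI)
  show "((\<lambda>r::real. r) \<longlongrightarrow> 0) (at_right 0)" by (rule tendsto_ident_at)
  show "((\<lambda>r. a - 1) \<longlongrightarrow> a - 1) (at_right 0)" by simp
  show "\<forall>\<^sub>F r in at_right 0. 0 \<le> (r::real)" using eventually_at_right_less[of "0::real"]
    by eventually_elim simp
  show "0 < a - 1" using a by simp
qed

lemma pe: "r > 0 \<Longrightarrow> r powr (a + 1) / (pi * r^2) = r powr (a - 1) / pi"
proof -
  assume r: "r > 0"
  have "r powr (a - 1) = r powr ((a + 1) - 2)" by simp
  also have "\<dots> = r powr (a + 1) / r powr 2" by (rule powr_diff)
  also have "r powr 2 = r^2" using r by (simp add: powr_numeral)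
  finally show ?thesis using r by (simp add: field_simps)
qed

lemma fb: "\<forall>\<^sub>F r in at_right 0. k1 / pi * r powr (a - 1) \<le> ff r \<and> ff r \<le> k2 / pi * r powr (a - 1) \<and> 0 < r \<and> r < 1"
proof -
  have e1: "\<forall>\<^sub>F r in at_right 0. (0::real) < r" by (rule eventually_at_right_less)
  have e2: "\<forall>\<^sub>F r in at_right 0. (r::real) < 1" by (simp add: eventually_at_right_field) (auto intro: exI[of _ 1])
  from mC_lower e1 e2 show ?thesis
  proof eventually_elim
    case (elim r)
    then have r: "r > 0" "r < 1" and lo: "ws a / 4 powr (a + 1) * r powr (a + 1) \<le> mC r" by auto
    have pr: "pi * r^2 > 0" using r by simp
    have "k1 / pi * r powr (a - 1) = k1 * (r powr (a + 1) / (pi * r^2))" using pe[OF r(1)] by simp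
    also have "\<dots> = (k1 * r powr (a + 1)) / (pi * r^2)" by simp
    also have "\<dots> \<le> mC r / (pi * r^2)" using lo pr unfolding k1_def by (intro divide_right_mono) auto
    finally have A: "k1 / pi * r powr (a - 1) \<le> ff r" unfolding ff_def .
    have "ff r \<le> k2 * r powr (a + 1) / (pi * r^2)" unfolding ff_def k2_def
      using mC_upper[OF r(1)] pr by (intro divide_right_mono) auto
    also have "\<dots> = k2 * (r powr (a + 1) / (pi * r^2))" by simp
    also have "\<dots> = k2 * (r powr (a - 1) / pi)" by (simp only: pe[OF r(1)])
    also have "\<dots> = k2 / pi * r powr (a - 1)" by simp
    finally show ?case using A r by simp
  qed
qed

lemma f_small: "\<forall>\<^sub>F r in at_right 0. ff r < 1"
proof -
  have "((\<lambda>r. k2 / pi * r powr (a - 1)) \<longlongrightarrow> k2 / pi * 0) (at_right 0)"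
    by (intro tendsto_mult tendsto_const pw0)
  then have "\<forall>\<^sub>F r in at_right 0. k2 / pi * r powr (a - 1) < 1" by (intro order_tendstoD(2)) auto
  from fb this show ?thesis
  proof eventually_elim
    case (elim r)
    then show ?case by (meson order_le_less_trans)
  qed
qed

lemma ff_lim: "(ff \<longlongrightarrow> 0) (at_right 0)"
proof (rule tendsto_sandwich[where f="\<lambda>_. 0" and h="\<lambda>r. k2 / pi * r powr (a - 1)"])
  show "\<forall>\<^sub>F r in at_right 0. 0 \<le> ff r" using fb
  proof eventually_elim
    case (elim r)
    have "0 \<le> k1 / pi * r powr (a - 1)" using k_pos by simp
    then show ?case using elim by linarith
  qed
  show "\<forall>\<^sub>F r in at_right 0. ff r \<le> k2 / pi * r powr (a - 1)" using fb by eventually_elim auto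
  show "((\<lambda>r. k2 / pi * r powr (a - 1)) \<longlongrightarrow> 0) (at_right 0)"
    using tendsto_mult[OF tendsto_const pw0, of "k2 / pi"] by simp
qed simp

lemma mC_pos: "r > 0 \<Longrightarrow> mC r > 0"
proof -
  assume r: "r > 0"
  obtain b where b: "b > 0" "\<And>y. 0 < y \<Longrightarrow> y < b \<Longrightarrow> k1 / pi * y powr (a - 1) \<le> ff y \<and> ff y \<le> k2 / pi * y powr (a - 1) \<and> 0 < y \<and> y < 1"
    using fb unfolding eventually_at_right_field by auto
  define r' where "r' = min r (b / 2)"
  have r': "0 < r'" "r' < b" "r' \<le> r" using r b by (auto simp: r'_def)
  have "0 < k1 / pi * r' powr (a - 1)" using k_pos r' by simp
  also have "\<dots> \<le> ff r'" using b(2)[OF r'(1,2)] by simp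
  moreover have "mC r' = ff r' * (pi * r'^2)" using r' by (simp add: ff_def)
  moreover have "pi * r'^2 > 0" using r' by simp
  ultimately have "mC r' > 0" by simp
  then show ?thesis using mC_mono[OF r'(3)] by simp
qed

end

theorem proposition1:
  fixes a :: real
  assumes "a > 1"
  shows "field_a a 0 = 0 \<and>
         is_stability_index (basin (field_a a) {0}) (0 :: real \<times> real) (ereal (a - 1)) \<and>
         a - 1 > 0"
proof (intro conjI)
  have a: "a > 1" using assms .
  interpret Mctx a by (rule Mctx.intro[OF a])
  define B where "B = basin (field_a a) {0}"
  have Sig: "Sigma_eps B (0 :: real \<times> real) r = 1 - ff r" if "r > 0" for r
    unfolding B_def ff_def using Sig_eq[OF a that] .
  have Bleb: "B \<in> sets lebesgue" unfolding B_def basin_eq[OF a] by (rule Bs_leb)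
  show "field_a a 0 = 0" by (simp add: field_a_def zero_prod_def)
  show "a - 1 > 0" using a by simp
  have not1: "\<not> (\<exists>\<epsilon>>0. Sigma_eps B (0 :: real \<times> real) \<epsilon> = 1)"
  proof
    assume "\<exists>\<epsilon>>0. Sigma_eps B (0 :: real \<times> real) \<epsilon> = 1"
    then obtain r where r: "r > 0" "Sigma_eps B 0 r = 1" by auto
    then have "ff r = 0" using Sig[OF r(1)] by simp
    then show False using mC_pos[OF r(1)] r(1) by (simp add: ff_def)
  qed
  have not0: "\<not> (\<exists>\<epsilon>>0. Sigma_eps B (0 :: real \<times> real) \<epsilon> = 0)"
  proof
    assume "\<exists>\<epsilon>>0. Sigma_eps B (0 :: real \<times> real) \<epsilon> = 0"
    then obtain r where r: "r > 0" "Sigma_eps B 0 r = 0" by auto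
    obtain b where b: "b > 0" "\<And>y. 0 < y \<Longrightarrow> y < b \<Longrightarrow> ff y < 1"
      using f_small unfolding eventually_at_right_field by auto
    define r' where "r' = min r (b / 2)"
    have r': "0 < r'" "r' < b" "r' \<le> r" using r b by (auto simp: r'_def)
    have "Sigma_eps B 0 r' > 0" using Sig[OF r'(1)] b(2)[OF r'(1,2)] by simp
    then have "measure lebesgue (ball (0::real\<times>real) r' \<inter> B) > 0"
      unfolding Sigma_eps_def by (simp add: zero_less_divide_iff)
    also have "measure lebesgue (ball (0::real\<times>real) r' \<inter> B) \<le> measure lebesgue (ball (0::real\<times>real) r \<inter> B)"
      using r' Bleb by (intro measure_mono_fmeasurable bounded_set_imp_lmeasurable) auto
    finally have "measure lebesgue (ball (0::real\<times>real) r \<inter> B) > 0" .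
    moreover have "measure lebesgue (ball (0::real\<times>real) r) > 0" using r(1) ball_meas[of r] by simp
    ultimately have "Sigma_eps B 0 r > 0" unfolding Sigma_eps_def by simp
    then show False using r by simp
  qed
  have ev_pos: "\<forall>\<^sub>F r in at_right 0. (0::real) < r" by (rule eventually_at_right_less)
  have sp: "is_sigma_plus B (0 :: real \<times> real) (ereal (a - 1))"
    unfolding is_sigma_plus_def if_not_P[OF not1] lim_ereal
  proof -
    have cong: "\<forall>\<^sub>F r in at_right 0. ln (ff r) / ln r = ln (1 - Sigma_eps B 0 r) / ln r"
      using ev_pos by eventually_elim (simp add: Sig)
    have "((\<lambda>r. ln (ff r) / ln r) \<longlongrightarrow> a - 1) (at_right 0)"
    proof (rule tendsto_sandwich[where f="\<lambda>r. ln (k2 / pi) / ln r + (a - 1)" and h="\<lambda>r. ln (k1 / pi) / ln r + (a - 1)"])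
      show "\<forall>\<^sub>F r in at_right 0. ln (k2 / pi) / ln r + (a - 1) \<le> ln (ff r) / ln r" using fb
      proof eventually_elim
        case (elim r)
        then have r: "0 < r" "r < 1" and up: "ff r \<le> k2 / pi * r powr (a - 1)" by auto
        have lr: "ln r < 0" using r by simp
        have fp: "ff r > 0" using mC_pos[OF r(1)] r(1) by (simp add: ff_def)
        have "ln (ff r) \<le> ln (k2 / pi * r powr (a - 1))" using up fp by simp
        also have "\<dots> = ln (k2 / pi) + (a - 1) * ln r" using k_pos r by (subst ln_mult) (auto simp: ln_powr)
        finally have "(ln (k2 / pi) + (a - 1) * ln r) / ln r \<le> ln (ff r) / ln r"
          using lr by (intro divide_right_mono_neg) auto
        also have "(ln (k2 / pi) + (a - 1) * ln r) / ln r = ln (k2 / pi) / ln r + (a - 1)"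
          using lr by (simp add: add_divide_distrib)
        finally show ?case .
      qed
      show "\<forall>\<^sub>F r in at_right 0. ln (ff r) / ln r \<le> ln (k1 / pi) / ln r + (a - 1)" using fb
      proof eventually_elim
        case (elim r)
        then have r: "0 < r" "r < 1" and lo: "k1 / pi * r powr (a - 1) \<le> ff r" by auto
        have lr: "ln r < 0" using r by simp
        have kp: "k1 / pi * r powr (a - 1) > 0" using k_pos r by simp
        have "ln (k1 / pi * r powr (a - 1)) \<le> ln (ff r)" using lo kp by simp
        moreover have "ln (k1 / pi * r powr (a - 1)) = ln (k1 / pi) + (a - 1) * ln r" using k_pos r by (subst ln_mult) (auto simp: ln_powr)
        ultimately have "ln (ff r) / ln r \<le> (ln (k1 / pi) + (a - 1) * ln r) / ln r"
          using lr by (intro divide_right_mono_neg) auto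
        also have "(ln (k1 / pi) + (a - 1) * ln r) / ln r = ln (k1 / pi) / ln r + (a - 1)"
          using lr by (simp add: add_divide_distrib)
        finally show ?case .
      qed
      show "((\<lambda>r. ln (k2 / pi) / ln r + (a - 1)) \<longlongrightarrow> a - 1) (at_right 0)"
        using tendsto_add[OF tendsto_divide_0[OF tendsto_const ln_inf] tendsto_const, of "ln (k2 / pi)" "a - 1"] by simp
      show "((\<lambda>r. ln (k1 / pi) / ln r + (a - 1)) \<longlongrightarrow> a - 1) (at_right 0)"
        using tendsto_add[OF tendsto_divide_0[OF tendsto_const ln_inf] tendsto_const, of "ln (k1 / pi)" "a - 1"] by simp
    qed
    then show "((\<lambda>r. ln (1 - Sigma_eps B 0 r) / ln r) \<longlongrightarrow> a - 1) (at_right 0)"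
      using tendsto_cong[OF cong] by simp
  qed
  have sm: "is_sigma_minus B (0 :: real \<times> real) (ereal 0)"
    unfolding is_sigma_minus_def if_not_P[OF not0] lim_ereal
  proof -
    have cong: "\<forall>\<^sub>F r in at_right 0. ln (1 - ff r) / ln r = ln (Sigma_eps B 0 r) / ln r"
      using ev_pos by eventually_elim (simp add: Sig)
    have "((\<lambda>r. 1 - ff r) \<longlongrightarrow> 1 - 0) (at_right 0)" by (intro tendsto_diff tendsto_const ff_lim)
    then have "((\<lambda>r. ln (1 - ff r)) \<longlongrightarrow> ln 1) (at_right 0)" by (intro tendsto_ln) auto
    then have "((\<lambda>r. ln (1 - ff r) / ln r) \<longlongrightarrow> 0) (at_right 0)"
      by (intro tendsto_divide_0[OF _ ln_inf])
    then show "((\<lambda>r. ln (Sigma_eps B 0 r) / ln r) \<longlongrightarrow> 0) (at_right 0)"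
      using tendsto_cong[OF cong] by simp
  qed
  show "is_stability_index (basin (field_a a) {0}) (0 :: real \<times> real) (ereal (a - 1))"
    unfolding is_stability_index_def B_def[symmetric]
    by (intro exI[of _ "ereal (a - 1)"] exI[of _ "ereal 0"]) (use sp sm in simp)
qed

end
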